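(* Let $P=\{x\in\mathbb{R}^n: Ax\ge b\}$ with rational data be full-dimensional and pointed, let $\mathcal{I}\subseteq\{1,\dots,n\}$, $P_I=\{x\in P: x_j\in\mathbb{Z}\ \forall j\in\mathcal{I}\}$, and let $c\in\mathbb{R}^n$. Let $\mathcal{T}$ be finite and $P^t=\{x\in P: D^tx\ge D^t_0\}$, $t\in\mathcal{T}$, be the terms of a disjunction with $P_I\subseteq P_D:=\operatorname{cl}\operatorname{conv}(\bigcup_t P^t)$. For each $t\in\mathcal{T}$, let $p^t$ be a basic optimal solution to $\min\{c^\top x: x\in P^t\}$ with an associated cobasis, let $C^t$ be the basis cone at $p^t$, with extreme rays $r^{t1},\dots,r^{tn}$. Then the simple point-ray collection $(\mathcal{P}^0,\mathcal{R}^0)$, where $\mathcal{P}^0=\{p^t: t\in\mathcal{T}\}$ and $\mathcal{R}^0=\{r^{tj}: t\in\mathcal{T}, j\in[n]\}$, is proper.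
   Context: A cobasis of the basic solution $p^t$ is a set of $n$ linearly independent inequalities from the system defining $P^t$ (those corresponding to nonbasic variables) that are tight at $p^t$; the basis cone $C^t$ is the intersection of these $n$ half-spaces, a cone with apex $p^t$ and $n$ extreme rays. For finite $\mathcal{P},\mathcal{R}\subset\mathbb{R}^n$, the point-ray linear program (PRLP) has feasible region $\{(\alpha,\beta): \alpha^\top p\ge\beta\ \forall p\in\mathcal{P},\ \alpha^\top r\ge 0\ \forall r\in\mathcal{R}\}$, and $(\mathcal{P},\mathcal{R})$ is proper if $\alpha^\top x\ge\beta$ is valid for $P_I$ whenever $(\alpha,\beta)$ is PRLP-feasible. It is assumed (implicitly, for the definition) that each $\min\{c^\top x: x\in P^t\}$ has a basic optimal solution. *)

theory Defs
  imports "HOL-Analysis.Analysis"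
begin

definition polyh :: "('i \<Rightarrow> real^'n) \<Rightarrow> ('i \<Rightarrow> real) \<Rightarrow> 'i set \<Rightarrow> (real^'n) set" where
  "polyh g g0 K = {x. \<forall>i\<in>K. g i \<bullet> x \<ge> g0 i}"

definition full_dimensional :: "(real^'n) set \<Rightarrow> bool" where
  "full_dimensional S \<longleftrightarrow> interior S \<noteq> {}"

definition pointed :: "(real^'n) set \<Rightarrow> bool" where
  "pointed S \<longleftrightarrow> \<not> (\<exists>x\<in>S. \<exists>d. d \<noteq> 0 \<and> (\<forall>l::real. x + l *\<^sub>R d \<in> S))"

definition int_points :: "(real^'n) set \<Rightarrow> 'n set \<Rightarrow> (real^'n) set" where
  "int_points S I = {x \<in> S. \<forall>j\<in>I. x $ j \<in> \<int>}"

definition cobasis :: "('i \<Rightarrow> real^'n) \<Rightarrow> ('i \<Rightarrow> real) \<Rightarrow> 'i set \<Rightarrow> real^'n \<Rightarrow> 'i set \<Rightarrow> bool" where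
  "cobasis g g0 K p N \<longleftrightarrow> N \<subseteq> K \<and> card N = CARD('n) \<and> inj_on g N \<and>
     \<not> dependent (g ` N) \<and> (\<forall>i\<in>N. g i \<bullet> p = g0 i)"


definition extreme_ray_dir :: "(real^'n) set \<Rightarrow> real^'n \<Rightarrow> real^'n \<Rightarrow> bool" where
  "extreme_ray_dir C p r \<longleftrightarrow> r \<noteq> 0 \<and> ((\<lambda>l::real. p + l *\<^sub>R r) ` {0..}) face_of C"

definition prlp_feasible :: "(real^'n) set \<Rightarrow> (real^'n) set \<Rightarrow> real^'n \<Rightarrow> real \<Rightarrow> bool" where
  "prlp_feasible Pts Rays \<alpha> \<beta> \<longleftrightarrow> (\<forall>p\<in>Pts. \<alpha> \<bullet> p \<ge> \<beta>) \<and> (\<forall>r\<in>Rays. \<alpha> \<bullet> r \<ge> 0)"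

definition proper :: "(real^'n) set \<Rightarrow> (real^'n) set \<Rightarrow> (real^'n) set \<Rightarrow> bool" where
  "proper PI Pts Rays \<longleftrightarrow> (\<forall>\<alpha> \<beta>. prlp_feasible Pts Rays \<alpha> \<beta> \<longrightarrow> (\<forall>x\<in>PI. \<alpha> \<bullet> x \<ge> \<beta>))"

text \<open>The inequality system of a disjunctive term: rows of A (Inl i, i < m) and rows of D (Inr k, k < q).\<close>
definition sysg :: "(nat \<Rightarrow> real^'n) \<Rightarrow> (nat \<Rightarrow> real^'n) \<Rightarrow> nat + nat \<Rightarrow> real^'n" where
  "sysg A D = case_sum A D"
definition sysb :: "(nat \<Rightarrow> real) \<Rightarrow> (nat \<Rightarrow> real) \<Rightarrow> nat + nat \<Rightarrow> real" where
  "sysb b D0 = case_sum b D0"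
definition sysK :: "nat \<Rightarrow> nat \<Rightarrow> (nat + nat) set" where
  "sysK m q = Inl ` {..<m} \<union> Inr ` {..<q}"

end

theory Submission
  imports Defs
begin

lemma zero_if_orth:
  fixes G :: "(real^'n) set" and w :: "real^'n"
  assumes "finite G" "card G = CARD('n)" "\<not> dependent G" "\<forall>y\<in>G. y \<bullet> w = 0"
  shows "w = 0"
proof -
  have "span G = UNIV"
    using assms card_eq_dim[of G UNIV] by auto
  hence "orthogonal w w"
    using orthogonal_to_span[of w G w] assms(4) by (auto simp: orthogonal_def inner_commute)
  thus ?thesis by (simp add: orthogonal_def)
qed

lemma dual_exists:
  fixes g :: "'i \<Rightarrow> real^'n"
  assumes fin: "finite N" and card: "card N = CARD('n)" and inj: "inj_on g N"
    and ind: "\<not> dependent (g ` N)" and k: "k \<in> N"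
  shows "\<exists>e. g k \<bullet> e = 1 \<and> (\<forall>i\<in>N. i \<noteq> k \<longrightarrow> g i \<bullet> e = 0)"
proof -
  have cG: "card (g ` N) = CARD('n)" using card inj by (simp add: card_image)
  have "dim (g ` (N - {k})) \<le> card (g ` (N - {k}))"
    using fin by (intro dim_le_card) (auto intro: span_base)
  also have "\<dots> \<le> card (N - {k})" using fin card_image_le by blast
  also have "\<dots> < CARD('n)" using fin k card by (simp add: card_Diff_singleton)
  finally have "dim (g ` (N - {k})) < DIM(real^'n)" by simp
  then obtain v where v: "v \<noteq> 0" "\<And>y. y \<in> span (g ` (N - {k})) \<Longrightarrow> orthogonal v y"
    using orthogonal_to_subspace_exists by blast
  have vi: "g i \<bullet> v = 0" if "i \<in> N" "i \<noteq> k" for i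
    using v(2)[of "g i"] that by (auto simp: orthogonal_def inner_commute intro: span_base)
  have "g k \<bullet> v \<noteq> 0"
  proof
    assume "g k \<bullet> v = 0"
    hence "\<forall>y\<in>g ` N. y \<bullet> v = 0" using vi by auto
    hence "v = 0" using zero_if_orth[OF _ cG ind] fin by auto
    with v show False by simp
  qed
  thus ?thesis
    by (intro exI[of _ "(1 / (g k \<bullet> v)) *\<^sub>R v"]) (auto simp: vi)
qed

lemma polyh_convex: "convex (polyh g g0 N)"
  unfolding polyh_def convex_def
proof (intro allI impI ballI, clarify)
  fix x y u v i assume x: "\<forall>i\<in>N. g0 i \<le> g i \<bullet> x" and y: "\<forall>i\<in>N. g0 i \<le> g i \<bullet> y"
    and uv: "0 \<le> (u::real)" "0 \<le> v" "u + v = 1" and i: "i \<in> N"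
  have "u * g0 i \<le> u * (g i \<bullet> x)" using x i uv by (simp add: mult_left_mono)
  moreover have "v * g0 i \<le> v * (g i \<bullet> y)" using y i uv by (simp add: mult_left_mono)
  ultimately have "(u + v) * g0 i \<le> u * (g i \<bullet> x) + v * (g i \<bullet> y)" by (simp add: distrib_right)
  thus "g0 i \<le> g i \<bullet> (u *\<^sub>R x + v *\<^sub>R y)" using uv by (simp add: inner_add_right)
qed

lemma cone_bound:
  fixes g :: "'i \<Rightarrow> real^'n"
  assumes fin: "finite N" and card: "card N = CARD('n)" and inj: "inj_on g N"
    and ind: "\<not> dependent (g ` N)" and tight: "\<forall>i\<in>N. g i \<bullet> p = g0 i"
    and ar: "\<forall>d. extreme_ray_dir (polyh g g0 N) p d \<longrightarrow> \<alpha> \<bullet> d \<ge> 0"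
    and x: "x \<in> polyh g g0 N"
  shows "\<alpha> \<bullet> p \<le> \<alpha> \<bullet> x"
proof -
  have cG: "card (g ` N) = CARD('n)" using card inj by (simp add: card_image)
  have zo: "w = 0" if "\<forall>i\<in>N. g i \<bullet> w = 0" for w
    using zero_if_orth[OF _ cG ind, of w] fin that by auto
  from dual_exists[OF fin card inj ind]
  obtain e where e: "\<And>k. k \<in> N \<Longrightarrow> g k \<bullet> e k = 1"
     "\<And>k i. k \<in> N \<Longrightarrow> i \<in> N \<Longrightarrow> i \<noteq> k \<Longrightarrow> g i \<bullet> e k = 0"
    by metis
  have sumd: "(\<Sum>k\<in>N. c k * (g i \<bullet> e k)) = c i" if "i \<in> N" for c i
  proof -
    have "(\<Sum>k\<in>N. c k * (g i \<bullet> e k)) = c i * (g i \<bullet> e i) + (\<Sum>k\<in>N-{i}. c k * (g i \<bullet> e k))"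
      using fin that by (simp add: sum.remove)
    also have "(\<Sum>k\<in>N-{i}. c k * (g i \<bullet> e k)) = 0"
      using e(2) that by (intro sum.neutral) auto
    finally show ?thesis using e(1) that by simp
  qed
  let ?C = "polyh g g0 N"
  have ek: "\<alpha> \<bullet> e k \<ge> 0" if k: "k \<in> N" for k
  proof -
    define a where "a = (\<Sum>i\<in>N-{k}. g i)"
    define bb where "bb = (\<Sum>i\<in>N-{k}. g0 i)"
    have ge: "a \<bullet> y \<ge> bb" if "y \<in> ?C" for y
      using that unfolding a_def bb_def polyh_def by (auto simp: inner_sum_left intro: sum_mono)
    have face: "(?C \<inter> {y. a \<bullet> y = bb}) face_of ?C"
      by (rule face_of_Int_supporting_hyperplane_ge[OF polyh_convex]) (use ge in auto)
    have eq: "?C \<inter> {y. a \<bullet> y = bb} = (\<lambda>l::real. p + l *\<^sub>R e k) ` {0..}"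
    proof
      show "?C \<inter> {y. a \<bullet> y = bb} \<subseteq> (\<lambda>l::real. p + l *\<^sub>R e k) ` {0..}"
      proof
        fix y assume y: "y \<in> ?C \<inter> {y. a \<bullet> y = bb}"
        have yC: "\<forall>i\<in>N. g0 i \<le> g i \<bullet> y" using y by (auto simp: polyh_def)
        have "(\<Sum>i\<in>N-{k}. g i \<bullet> y - g0 i) = 0"
          using y unfolding a_def bb_def by (simp add: sum_subtractf inner_sum_left)
        hence "\<forall>i\<in>N-{k}. g i \<bullet> y - g0 i = 0"
          using fin yC by (subst (asm) sum_nonneg_eq_0_iff) auto
        hence tt: "\<And>i. i \<in> N \<Longrightarrow> i \<noteq> k \<Longrightarrow> g i \<bullet> y = g0 i" by auto
        define l where "l = g k \<bullet> (y - p)"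
        have "y - p - l *\<^sub>R e k = 0"
        proof (rule zo, intro ballI)
          fix i assume i: "i \<in> N"
          show "g i \<bullet> (y - p - l *\<^sub>R e k) = 0"
          proof (cases "i = k")
            case True thus ?thesis using e(1) i by (simp add: l_def inner_diff_right)
          next
            case False thus ?thesis using e(2)[OF k i False] tt[OF i False] tight i
              by (simp add: inner_diff_right)
          qed
        qed
        moreover have "l \<ge> 0" using yC tight k by (simp add: l_def inner_diff_right)
        ultimately show "y \<in> (\<lambda>l::real. p + l *\<^sub>R e k) ` {0..}"
          by (intro image_eqI[of _ _ l]) (auto simp: algebra_simps)
      qed
    next
      show "(\<lambda>l::real. p + l *\<^sub>R e k) ` {0..} \<subseteq> ?C \<inter> {y. a \<bullet> y = bb}"
      proof
        fix y assume "y \<in> (\<lambda>l::real. p + l *\<^sub>R e k) ` {0..}"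
        then obtain l where l: "l \<in> {0..}" and yl: "y = p + l *\<^sub>R e k" by blast
        have gi: "g i \<bullet> (p + l *\<^sub>R e k) = g0 i + (if i = k then l else 0)" if "i \<in> N" for i
          using that e k tight by (auto simp: inner_add_right)
        have "p + l *\<^sub>R e k \<in> ?C"
          using gi l by (auto simp: polyh_def)
        moreover have "a \<bullet> (p + l *\<^sub>R e k) = bb"
          unfolding a_def bb_def inner_sum_left using gi by (intro sum.cong) auto
        ultimately show "y \<in> ?C \<inter> {y. a \<bullet> y = bb}" using yl by simp
      qed
    qed
    have "extreme_ray_dir ?C p (e k)"
      unfolding extreme_ray_dir_def using face eq e(1)[OF k] by auto
    thus ?thesis using ar by blast
  qed
  define c where "c k = g k \<bullet> (x - p)" for k
  have "x - p - (\<Sum>k\<in>N. c k *\<^sub>R e k) = 0"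
  proof (rule zo, intro ballI)
    fix i assume i: "i \<in> N"
    have "g i \<bullet> (\<Sum>k\<in>N. c k *\<^sub>R e k) = (\<Sum>k\<in>N. c k * (g i \<bullet> e k))"
      by (simp add: inner_sum_right)
    also have "\<dots> = c i" using sumd i by simp
    finally show "g i \<bullet> (x - p - (\<Sum>k\<in>N. c k *\<^sub>R e k)) = 0"
      by (simp add: inner_diff_right c_def)
  qed
  hence xe: "x = p + (\<Sum>k\<in>N. c k *\<^sub>R e k)" by (simp add: algebra_simps)
  have cnn: "c k \<ge> 0" if "k \<in> N" for k
    using x tight that by (auto simp: c_def polyh_def inner_diff_right)
  have "\<alpha> \<bullet> x = \<alpha> \<bullet> p + (\<Sum>k\<in>N. c k * (\<alpha> \<bullet> e k))"
    by (subst xe) (simp add: inner_add_right inner_sum_right)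
  moreover have "(\<Sum>k\<in>N. c k * (\<alpha> \<bullet> e k)) \<ge> 0"
    using cnn ek by (intro sum_nonneg) auto
  ultimately show ?thesis by simp
qed

theorem proposition1:
  fixes A :: "nat \<Rightarrow> real^'n" and b :: "nat \<Rightarrow> real" and m :: nat
    and I :: "'n set" and c :: "real^'n"
    and T :: "'t set"
    and D :: "'t \<Rightarrow> nat \<Rightarrow> real^'n" and D0 :: "'t \<Rightarrow> nat \<Rightarrow> real" and q :: "'t \<Rightarrow> nat"
    and p :: "'t \<Rightarrow> real^'n" and N :: "'t \<Rightarrow> (nat + nat) set"
    and r :: "'t \<Rightarrow> 'n \<Rightarrow> real^'n"
  assumes rational: "\<forall>i<m. (\<forall>j. A i $ j \<in> \<rat>) \<and> b i \<in> \<rat>"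
    and fulldim: "full_dimensional (polyh A b {..<m})"
    and pointed: "pointed (polyh A b {..<m})"
    and finT: "finite T"
    and disj: "int_points (polyh A b {..<m}) I
        \<subseteq> closure (convex hull (\<Union>t\<in>T. polyh (sysg A (D t)) (sysb b (D0 t)) (sysK m (q t))))"
    and popt: "\<forall>t\<in>T. p t \<in> polyh (sysg A (D t)) (sysb b (D0 t)) (sysK m (q t)) \<and>
        (\<forall>x\<in>polyh (sysg A (D t)) (sysb b (D0 t)) (sysK m (q t)). c \<bullet> p t \<le> c \<bullet> x)"
    and cob: "\<forall>t\<in>T. cobasis (sysg A (D t)) (sysb b (D0 t)) (sysK m (q t)) (p t) (N t)"
    and rays: "\<forall>t\<in>T. \<forall>j. extreme_ray_dir (polyh (sysg A (D t)) (sysb b (D0 t)) (N t)) (p t) (r t j)"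
    and allrays: "\<forall>t\<in>T. \<forall>d. extreme_ray_dir (polyh (sysg A (D t)) (sysb b (D0 t)) (N t)) (p t) d
        \<longrightarrow> (\<exists>j. \<exists>l>0. d = l *\<^sub>R r t j)"
  shows "proper (int_points (polyh A b {..<m}) I) (p ` T) {r t j |t j. t \<in> T}"
  
  unfolding proper_def
proof (intro allI impI ballI)
  fix \<alpha> \<beta> x
  assume feas: "prlp_feasible (p ` T) {r t j |t j. t \<in> T} \<alpha> \<beta>"
    and x: "x \<in> int_points (polyh A b {..<m}) I"
  let ?H = "{y. \<alpha> \<bullet> y \<ge> \<beta>}"
  have sub: "polyh (sysg A (D t)) (sysb b (D0 t)) (sysK m (q t)) \<subseteq> ?H" if t: "t \<in> T" for t
  proof
    fix y assume y: "y \<in> polyh (sysg A (D t)) (sysb b (D0 t)) (sysK m (q t))"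
    have cb: "cobasis (sysg A (D t)) (sysb b (D0 t)) (sysK m (q t)) (p t) (N t)" using cob t by blast
    hence NK: "N t \<subseteq> sysK m (q t)" and cN: "card (N t) = CARD('n)"
      and inj: "inj_on (sysg A (D t)) (N t)" and ind: "\<not> dependent (sysg A (D t) ` N t)"
      and ti: "\<forall>i\<in>N t. sysg A (D t) i \<bullet> p t = sysb b (D0 t) i"
      unfolding cobasis_def by auto
    have fin: "finite (N t)" using cN card_ge_0_finite[of "N t"] by simp
    have yN: "y \<in> polyh (sysg A (D t)) (sysb b (D0 t)) (N t)"
      using y NK by (auto simp: polyh_def)
    have ar: "\<forall>d. extreme_ray_dir (polyh (sysg A (D t)) (sysb b (D0 t)) (N t)) (p t) d \<longrightarrow> \<alpha> \<bullet> d \<ge> 0"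
    proof (intro allI impI)
      fix d assume "extreme_ray_dir (polyh (sysg A (D t)) (sysb b (D0 t)) (N t)) (p t) d"
      then obtain j l where l: "l > 0" "d = l *\<^sub>R r t j" using allrays t by blast
      have "\<alpha> \<bullet> r t j \<ge> 0" using feas t unfolding prlp_feasible_def by blast
      thus "\<alpha> \<bullet> d \<ge> 0" using l by simp
    qed
    have "\<alpha> \<bullet> p t \<le> \<alpha> \<bullet> y" by (rule cone_bound[OF fin cN inj ind ti ar yN])
    moreover have "\<alpha> \<bullet> p t \<ge> \<beta>" using feas t unfolding prlp_feasible_def by blast
    ultimately show "y \<in> ?H" by simp
  qed
  have "convex hull (\<Union>t\<in>T. polyh (sysg A (D t)) (sysb b (D0 t)) (sysK m (q t))) \<subseteq> ?H"
    using sub by (intro hull_minimal) (auto simp: convex_halfspace_ge)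
  hence "closure (convex hull (\<Union>t\<in>T. polyh (sysg A (D t)) (sysb b (D0 t)) (sysK m (q t)))) \<subseteq> ?H"
    by (intro closure_minimal) (auto simp: closed_halfspace_ge)
  thus "\<beta> \<le> \<alpha> \<bullet> x" using disj x by blast
qed

end
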